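(* Let $k$ be an algebraically closed field of characteristic $2$, $S=\mathbf{V}(g)\subset\mathbb{A}^3$ with $g = x^2+y^2z+yz^2+xyz$, and $m\ge 5$. Let $R_m = k[x_0,\dots,x_m,y_0,\dots,y_m,z_0,\dots,z_m]$, $(\mathbb{A}^3)_m=\mathrm{Spec}\,R_m$, and define $g^{(j)}\in R_m$ by $g(\sum_{i=0}^m x_it^i,\sum_{i=0}^m y_it^i,\sum_{i=0}^m z_it^i)=\sum_{j=0}^m g^{(j)}t^j$ in $R_m[t]/\langle t^{m+1}\rangle$. Let $S_m^0=\mathbf{V}(x_0,y_0,z_0,g^{(0)},\dots,g^{(m)})$ be the singular fiber of the $m$-th jet scheme of $S$. Define $I_m^0 = \langle x_0,x_1,x_2,y_0,y_1,z_0,z_1\rangle + \langle g^{(0)},\dots,g^{(m)}\rangle$, $I_m^1 = J_m^1 (R_m)_{z_1}\cap R_m$, $I_m^2 = J_m^2 (R_m)_{y_1}\cap R_m$, $I_m^3 = J_m^3 (R_m)_{y_1}\cap R_m$, where $J_m^1 = \langle x_0,x_1,y_0,y_1,z_0\rangle + \langle g^{(0)},\dots,g^{(m)}\rangle$, $J_m^2 = \langle x_0,x_1,y_0,z_0,z_1\rangle + \langle g^{(0)},\dots,g^{(m)}\rangle$, $J_m^3 = \langle x_0,x_1,y_0,z_0,y_1+z_1\rangle + \langle g^{(0)},\dots,g^{(m)}\rangle$, and $Z_m^i=\mathbf{V}(I_m^i)$ for $i=0,1,2,3$ (these are the irreducible components of $S_m^0$). Then the maximal elements of $\{Z_m^i\cap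 Z_m^j\mid i,j\in\{0,1,2,3\},\ i\ne j\}$ with respect to inclusion are $Z_m^0\cap Z_m^1$, $Z_m^0\cap Z_m^2$ and $Z_m^0\cap Z_m^3$, and they are pairwise distinct. In particular, $Z_m^1\cap Z_m^2,\ Z_m^2\cap Z_m^3,\ Z_m^3\cap Z_m^1\subsetneq Z_m^0$.
   Context: $(R_m)_h$ is the localization at powers of $h$, $J(R_m)_h\cap R_m$ the preimage in $R_m$ of the extended ideal, and $\mathbf{V}(\cdot)$ the zero set in $(\mathbb{A}^3)_m$. *)

theory Defs
  imports "HOL-Library.Poly_Mapping" "HOL-Computational_Algebra.Polynomial"
begin

datatype var = X nat | Y nat | Z nat

fun var_index :: "var \<Rightarrow> nat" where
  "var_index (X i) = i" | "var_index (Y i) = i" | "var_index (Z i) = i"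

type_synonym 'k mpoly = "(var \<Rightarrow>\<^sub>0 nat) \<Rightarrow>\<^sub>0 'k"

definition Var :: "var \<Rightarrow> 'k::comm_ring_1 mpoly" where
  "Var v = Poly_Mapping.single (Poly_Mapping.single v 1) 1"

definition vars :: "'k::zero mpoly \<Rightarrow> var set" where
  "vars p = (\<Union>mo\<in>Poly_Mapping.keys p. Poly_Mapping.keys mo)"

definition Rm :: "nat \<Rightarrow> 'k::zero mpoly set" where
  "Rm m = {p. \<forall>v\<in>vars p. var_index v \<le> m}"

definition eval :: "'k::comm_ring_1 mpoly \<Rightarrow> (var \<Rightarrow> 'k) \<Rightarrow> 'k" where
  "eval p a = (\<Sum>mo\<in>Poly_Mapping.keys p.
      Poly_Mapping.lookup p mo * (\<Prod>v\<in>Poly_Mapping.keys mo. a v ^ Poly_Mapping.lookup mo v))"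

text \<open>k-points of (A^3)_m: coordinates indexed by variables of R_m (others set to 0).\<close>
definition points :: "nat \<Rightarrow> (var \<Rightarrow> 'k::zero) set" where
  "points m = {a. \<forall>v. m < var_index v \<longrightarrow> a v = 0}"

definition ideal_gen :: "nat \<Rightarrow> 'k::comm_ring_1 mpoly set \<Rightarrow> 'k mpoly set" where
  "ideal_gen m S = {(\<Sum>s\<in>F. c s * s) | F c. finite F \<and> F \<subseteq> S \<and> (\<forall>s. c s \<in> Rm m)}"

text \<open>J (R_m)_h \<inter> R_m, i.e. the saturation of J with respect to h
  (x/1 \<in> J (R_m)_h iff h^n x \<in> J for some n).\<close>
definition saturate :: "nat \<Rightarrow> 'k::comm_ring_1 mpoly set \<Rightarrow> 'k mpoly \<Rightarrow> 'k mpoly set" where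
  "saturate m J h = {p \<in> Rm m. \<exists>n. h ^ n * p \<in> J}"

definition zero_set :: "nat \<Rightarrow> 'k::comm_ring_1 mpoly set \<Rightarrow> (var \<Rightarrow> 'k) set" where
  "zero_set m I = {a \<in> points m. \<forall>p\<in>I. eval p a = 0}"

definition gfun :: "'a::comm_ring_1 \<Rightarrow> 'a \<Rightarrow> 'a \<Rightarrow> 'a" where
  "gfun x y z = x^2 + y^2 * z + y * z^2 + x * y * z"

definition arc :: "(nat \<Rightarrow> var) \<Rightarrow> nat \<Rightarrow> 'k::comm_ring_1 mpoly poly" where
  "arc V m = (\<Sum>i\<le>m. monom (Var (V i)) i)"

text \<open>g^{(j)}: coefficient of t^j of g(x(t),y(t),z(t)); for j \<le> m this equals the
  coefficient in R_m[t]/(t^{m+1}).\<close>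
definition gj :: "nat \<Rightarrow> nat \<Rightarrow> 'k::comm_ring_1 mpoly" where
  "gj m j = coeff (gfun (arc X m) (arc Y m) (arc Z m)) j"

definition gens_g :: "nat \<Rightarrow> 'k::comm_ring_1 mpoly set" where
  "gens_g m = {gj m j | j. j \<le> m}"

definition I0 :: "nat \<Rightarrow> 'k::comm_ring_1 mpoly set" where
  "I0 m = ideal_gen m ({Var (X 0), Var (X 1), Var (X 2), Var (Y 0), Var (Y 1), Var (Z 0), Var (Z 1)}
            \<union> gens_g m)"

definition J1 :: "nat \<Rightarrow> 'k::comm_ring_1 mpoly set" where
  "J1 m = ideal_gen m ({Var (X 0), Var (X 1), Var (Y 0), Var (Y 1), Var (Z 0)} \<union> gens_g m)"

definition J2 :: "nat \<Rightarrow> 'k::comm_ring_1 mpoly set" where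
  "J2 m = ideal_gen m ({Var (X 0), Var (X 1), Var (Y 0), Var (Z 0), Var (Z 1)} \<union> gens_g m)"

definition J3 :: "nat \<Rightarrow> 'k::comm_ring_1 mpoly set" where
  "J3 m = ideal_gen m ({Var (X 0), Var (X 1), Var (Y 0), Var (Z 0), Var (Y 1) + Var (Z 1)} \<union> gens_g m)"

definition Iset :: "nat \<Rightarrow> nat \<Rightarrow> 'k::comm_ring_1 mpoly set" where
  "Iset m i = (if i = 0 then I0 m
               else if i = 1 then saturate m (J1 m) (Var (Z 1))
               else if i = 2 then saturate m (J2 m) (Var (Y 1))
               else saturate m (J3 m) (Var (Y 1)))"

definition Zc :: "nat \<Rightarrow> nat \<Rightarrow> (var \<Rightarrow> 'k::comm_ring_1) set" where
  "Zc m i = zero_set m (Iset m i)"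

definition maximal_elements :: "'a set set \<Rightarrow> 'a set set" where
  "maximal_elements \<S> = {A \<in> \<S>. \<forall>B\<in>\<S>. A \<subseteq> B \<longrightarrow> A = B}"

definition alg_closed :: "'k::field itself \<Rightarrow> bool" where
  "alg_closed _ \<longleftrightarrow> (\<forall>p :: 'k poly. 0 < degree p \<longrightarrow> (\<exists>x. poly p x = 0))"

end

theory Submission
  imports Defs
begin



definition mv :: "(var \<Rightarrow>\<^sub>0 nat) \<Rightarrow> (var \<Rightarrow> 'k::comm_ring_1) \<Rightarrow> 'k" where
  "mv mo a = (\<Prod>v\<in>Poly_Mapping.keys mo. a v ^ Poly_Mapping.lookup mo v)"

lemma mv_superset: "finite S \<Longrightarrow> Poly_Mapping.keys mo \<subseteq> S \<Longrightarrow>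
   mv mo a = (\<Prod>v\<in>S. a v ^ Poly_Mapping.lookup mo v)"
  unfolding mv_def by (rule prod.mono_neutral_left) (auto simp: in_keys_iff)

lemma mv_add: "mv (k + l) a = mv k a * mv l a"
proof -
  let ?S = "Poly_Mapping.keys k \<union> Poly_Mapping.keys l"
  have "mv (k + l) a = (\<Prod>v\<in>?S. a v ^ Poly_Mapping.lookup (k+l) v)"
    by (rule mv_superset) (auto dest: set_mp[OF keys_add])
  also have "\<dots> = (\<Prod>v\<in>?S. a v ^ Poly_Mapping.lookup k v) * (\<Prod>v\<in>?S. a v ^ Poly_Mapping.lookup l v)"
    by (simp add: lookup_add power_add prod.distrib)
  also have "\<dots> = mv k a * mv l a"
    by (subst (1 2) mv_superset[of ?S]) auto
  finally show ?thesis .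
qed

lemma eval_mv: "eval p a = (\<Sum>mo\<in>Poly_Mapping.keys p. Poly_Mapping.lookup p mo * mv mo a)"
  unfolding eval_def mv_def ..

lemma eval_superset: "finite S \<Longrightarrow> Poly_Mapping.keys p \<subseteq> S \<Longrightarrow>
   eval p a = (\<Sum>mo\<in>S. Poly_Mapping.lookup p mo * mv mo a)"
  unfolding eval_mv by (rule sum.mono_neutral_left) (auto simp: in_keys_iff)

lemma eval_add: "eval (p + q) a = eval p a + eval q a"
proof -
  let ?S = "Poly_Mapping.keys p \<union> Poly_Mapping.keys q"
  have "eval (p + q) a = (\<Sum>mo\<in>?S. Poly_Mapping.lookup (p+q) mo * mv mo a)"
    by (rule eval_superset) (auto dest: set_mp[OF keys_add])
  also have "\<dots> = eval p a + eval q a"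
    by (subst (1 2) eval_superset[of ?S]) (auto simp: lookup_add distrib_right sum.distrib)
  finally show ?thesis .
qed

lemma eval_zero[simp]: "eval 0 a = 0"
  by (simp add: eval_def)

lemma eval_sum: "eval (sum f F) a = (\<Sum>x\<in>F. eval (f x) a)"
  by (induction F rule: infinite_finite_induct) (auto simp: eval_add)

lemma eval_single[simp]: "eval (Poly_Mapping.single k c) a = c * mv k a"
  by (cases "c = 0") (simp_all add: eval_mv)

lemma pm_expand: "p = (\<Sum>k\<in>Poly_Mapping.keys p. Poly_Mapping.single k (Poly_Mapping.lookup p k))"
  by (rule poly_mapping_eqI) (auto simp: lookup_sum lookup_single when_def in_keys_iff
      intro: sum.neutral split: if_splits)

lemma eval_mult: "eval (p * q) a = eval p a * eval q a"
proof -
  have "p * q = (\<Sum>k\<in>Poly_Mapping.keys p. \<Sum>l\<in>Poly_Mapping.keys q.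
          Poly_Mapping.single k (Poly_Mapping.lookup p k) * Poly_Mapping.single l (Poly_Mapping.lookup q l))"
  proof -
    have "p * q = (\<Sum>k\<in>Poly_Mapping.keys p. Poly_Mapping.single k (Poly_Mapping.lookup p k)) *
       (\<Sum>l\<in>Poly_Mapping.keys q. Poly_Mapping.single l (Poly_Mapping.lookup q l))"
      by (simp only: pm_expand[symmetric])
    then show ?thesis by (simp add: sum_distrib_left sum_distrib_right sum.swap[of _ "Poly_Mapping.keys q"])
  qed
  then have "eval (p * q) a = (\<Sum>k\<in>Poly_Mapping.keys p. \<Sum>l\<in>Poly_Mapping.keys q.
        Poly_Mapping.lookup p k * mv k a * (Poly_Mapping.lookup q l * mv l a))"
    by (simp add: eval_sum mult_single mv_add mult_ac)
  also have "\<dots> = eval p a * eval q a"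
    by (simp add: eval_mv sum_distrib_left sum_distrib_right) (rule sum.swap)
  finally show ?thesis .
qed

lemma eval_one[simp]: "eval 1 a = 1"
  by (simp add: eval_mv mv_def)

lemma eval_uminus: "eval (- p) a = - eval p a"
  using eval_add[of p "-p" a] by (simp add: add_eq_0_iff2)

lemma eval_diff: "eval (p - q) a = eval p a - eval q a"
  using eval_add[of p "-q" a] eval_uminus[of q a] by simp

lemma eval_power: "eval (p ^ n) a = eval p a ^ n"
  by (induction n) (simp_all add: eval_mult)

lemma eval_Var[simp]: "eval (Var v) a = a v"
  by (simp add: Var_def mv_def)

lemma eval_of_nat: "eval (of_nat n) a = of_nat n"
  by (induction n) (simp_all add: eval_add)




lemma keys_uminus': "Poly_Mapping.keys (- p) = Poly_Mapping.keys (p :: 'a \<Rightarrow>\<^sub>0 'b::ab_group_add)"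
  by (auto simp: in_keys_iff)

lemma vars_add: "vars (p + q) \<subseteq> vars p \<union> vars q"
  unfolding vars_def using keys_add by fastforce

lemma vars_mult: "vars ((p::'k::comm_ring_1 mpoly) * q) \<subseteq> vars p \<union> vars q"
proof
  fix v assume "v \<in> vars (p * q)"
  then obtain mo where mo: "mo \<in> Poly_Mapping.keys (p*q)" "v \<in> Poly_Mapping.keys mo"
    unfolding vars_def by auto
  then obtain a b where "mo = a + b" "a \<in> Poly_Mapping.keys p" "b \<in> Poly_Mapping.keys q"
    using keys_mult by blast
  with mo(2) show "v \<in> vars p \<union> vars q" unfolding vars_def using keys_add by fastforce
qed

lemma vars_uminus: "vars (- (p::'k::comm_ring_1 mpoly)) = vars p"
  unfolding vars_def by (simp add: keys_uminus')

lemma Rm_add: "p \<in> Rm m \<Longrightarrow> q \<in> Rm m \<Longrightarrow> p + q \<in> Rm m"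
  unfolding Rm_def using vars_add by blast
lemma Rm_mult: "p \<in> Rm m \<Longrightarrow> q \<in> Rm m \<Longrightarrow> (p::'k::comm_ring_1 mpoly) * q \<in> Rm m"
  unfolding Rm_def using vars_mult by blast
lemma Rm_uminus: "p \<in> Rm m \<Longrightarrow> - (p::'k::comm_ring_1 mpoly) \<in> Rm m"
  unfolding Rm_def using vars_uminus by blast
lemma Rm_diff: "p \<in> Rm m \<Longrightarrow> q \<in> Rm m \<Longrightarrow> (p::'k::comm_ring_1 mpoly) - q \<in> Rm m"
  using Rm_add[OF _ Rm_uminus] by (metis diff_conv_add_uminus)
lemma Rm_0[simp]: "0 \<in> Rm m"
  by (simp add: Rm_def vars_def)
lemma Rm_1[simp]: "(1::'k::comm_ring_1 mpoly) \<in> Rm m"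
  by (simp add: Rm_def vars_def)
lemma Rm_Var: "var_index v \<le> m \<Longrightarrow> (Var v :: 'k::comm_ring_1 mpoly) \<in> Rm m"
  by (simp add: Rm_def vars_def Var_def)
lemma Rm_sum: "(\<And>x. x \<in> F \<Longrightarrow> f x \<in> Rm m) \<Longrightarrow> sum f F \<in> Rm m"
  by (induction F rule: infinite_finite_induct) (auto intro: Rm_add)
lemma Rm_power: "p \<in> Rm m \<Longrightarrow> (p::'k::comm_ring_1 mpoly) ^ n \<in> Rm m"
  by (induction n) (auto intro: Rm_mult)

definition PR :: "nat \<Rightarrow> 'k::comm_ring_1 mpoly poly set" where
  "PR m = {P. \<forall>n. coeff P n \<in> Rm m}"

lemma PR_add: "P \<in> PR m \<Longrightarrow> Q \<in> PR m \<Longrightarrow> P + Q \<in> PR m"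
  by (auto simp: PR_def intro: Rm_add)
lemma PR_diff: "P \<in> PR m \<Longrightarrow> Q \<in> PR m \<Longrightarrow> P - Q \<in> PR m"
  by (auto simp: PR_def intro: Rm_diff)
lemma PR_mult: "P \<in> PR m \<Longrightarrow> Q \<in> PR m \<Longrightarrow> P * Q \<in> PR m"
  by (auto simp: PR_def coeff_mult intro!: Rm_sum Rm_mult)
lemma PR_1: "1 \<in> PR m"
  by (auto simp: PR_def coeff_1)
lemma PR_power: "P \<in> PR m \<Longrightarrow> P ^ n \<in> PR m"
  by (induction n) (auto intro: PR_mult PR_1)
lemma PR_gfun: "P \<in> PR m \<Longrightarrow> Q \<in> PR m \<Longrightarrow> R \<in> PR m \<Longrightarrow> gfun P Q R \<in> PR m"
  unfolding gfun_def by (intro PR_add PR_mult PR_power)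
lemma PR_arc: "(Var (V i) :: 'k::comm_ring_1 mpoly) \<in> Rm m \<or> i > m \<Longrightarrow> True" by simp
lemma PR_arcsum: "(\<And>i. i \<le> n \<Longrightarrow> c i \<in> Rm m) \<Longrightarrow> (\<Sum>i\<le>n. monom (c i) i) \<in> PR m"
  by (auto simp: PR_def coeff_sum intro!: Rm_sum)

lemma var_index_le: "var_index (X i) = i" "var_index (Y i) = i" "var_index (Z i) = i" by simp_all

lemma arc_PR: "(V = X \<or> V = Y \<or> V = Z) \<Longrightarrow> (arc V m :: 'k::comm_ring_1 mpoly poly) \<in> PR m"
  unfolding arc_def by (rule PR_arcsum) (auto intro: Rm_Var)

lemma gj_Rm: "(gj m j :: 'k::comm_ring_1 mpoly) \<in> Rm m"
proof -
  have "gfun (arc X m) (arc Y m) (arc Z m) \<in> (PR m :: 'k mpoly poly set)"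
    by (intro PR_gfun arc_PR) auto
  then show ?thesis unfolding gj_def PR_def by auto
qed

lemma ideal_gen_0: "0 \<in> ideal_gen m S"
  unfolding ideal_gen_def by (rule CollectI, rule exI[of _ "{}"], rule exI[of _ "\<lambda>_. 0"]) simp

lemma ideal_gen_gen: "s \<in> S \<Longrightarrow> (s::'k::comm_ring_1 mpoly) \<in> ideal_gen m S"
  unfolding ideal_gen_def
  by (rule CollectI, rule exI[of _ "{s}"], rule exI[of _ "\<lambda>_. 1"]) simp

lemma ideal_gen_add: assumes "p \<in> ideal_gen m S" "q \<in> ideal_gen m S"
  shows "(p::'k::comm_ring_1 mpoly) + q \<in> ideal_gen m S"
proof -
  obtain F c where p: "p = (\<Sum>s\<in>F. c s * s)" "finite F" "F \<subseteq> S" "\<forall>s. c s \<in> Rm m"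
    using assms(1) unfolding ideal_gen_def by blast
  obtain G d where q: "q = (\<Sum>s\<in>G. d s * s)" "finite G" "G \<subseteq> S" "\<forall>s. d s \<in> Rm m"
    using assms(2) unfolding ideal_gen_def by blast
  define e where "e s = (if s \<in> F then c s else 0) + (if s \<in> G then d s else 0)" for s
  have "p = (\<Sum>s\<in>F \<union> G. (if s \<in> F then c s else 0) * s)"
    unfolding p(1) using p(2) q(2) by (intro sum.mono_neutral_cong_left) auto
  moreover have "q = (\<Sum>s\<in>F \<union> G. (if s \<in> G then d s else 0) * s)"
    unfolding q(1) using p(2) q(2) by (intro sum.mono_neutral_cong_left) auto
  ultimately have "p + q = (\<Sum>s\<in>F \<union> G. e s * s)"
    by (simp add: e_def sum.distrib distrib_right)
  moreover have "\<forall>s. e s \<in> Rm m" using p(4) q(4) by (auto simp: e_def intro: Rm_add)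
  ultimately show ?thesis unfolding ideal_gen_def using p q by blast
qed

lemma ideal_gen_mult: assumes "p \<in> ideal_gen m S" "r \<in> Rm m"
  shows "r * (p::'k::comm_ring_1 mpoly) \<in> ideal_gen m S"
proof -
  obtain F c where p: "p = (\<Sum>s\<in>F. c s * s)" "finite F" "F \<subseteq> S" "\<forall>s. c s \<in> Rm m"
    using assms(1) unfolding ideal_gen_def by blast
  have "r * p = (\<Sum>s\<in>F. (r * c s) * s)" by (simp add: p(1) sum_distrib_left mult.assoc)
  moreover have "\<forall>s. r * c s \<in> Rm m" using p(4) assms(2) by (auto intro: Rm_mult)
  ultimately show ?thesis unfolding ideal_gen_def using p
    by (intro CollectI exI[of _ F] exI[of _ "\<lambda>s. r * c s"]) auto
qed

lemma ideal_gen_uminus: "p \<in> ideal_gen m S \<Longrightarrow> - (p::'k::comm_ring_1 mpoly) \<in> ideal_gen m S"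
  using ideal_gen_mult[of p m S "-1"] by (simp add: Rm_uminus)

lemma ideal_gen_diff: "p \<in> ideal_gen m S \<Longrightarrow> q \<in> ideal_gen m S \<Longrightarrow> (p::'k::comm_ring_1 mpoly) - q \<in> ideal_gen m S"
  using ideal_gen_add[OF _ ideal_gen_uminus] by (metis diff_conv_add_uminus)

lemma ideal_gen_sum: "(\<And>x. x \<in> F \<Longrightarrow> f x \<in> ideal_gen m S) \<Longrightarrow> (sum f F :: 'k::comm_ring_1 mpoly) \<in> ideal_gen m S"
  by (induction F rule: infinite_finite_induct) (auto intro: ideal_gen_add ideal_gen_0)

lemma ideal_gen_mono: "S \<subseteq> T \<Longrightarrow> ideal_gen m S \<subseteq> ideal_gen m T"
  unfolding ideal_gen_def by blast

lemma ideal_gen_Rm: "S \<subseteq> Rm m \<Longrightarrow> ideal_gen m S \<subseteq> (Rm m :: 'k::comm_ring_1 mpoly set)"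
  unfolding ideal_gen_def by (auto intro!: Rm_sum Rm_mult)

lemma ideal_gen_eval: assumes "p \<in> ideal_gen m S" "\<And>s. s \<in> S \<Longrightarrow> eval s a = 0"
  shows "eval (p::'k::comm_ring_1 mpoly) a = 0"
proof -
  obtain F c where p: "p = (\<Sum>s\<in>F. c s * s)" "finite F" "F \<subseteq> S" "\<forall>s. c s \<in> Rm m"
    using assms(1) unfolding ideal_gen_def by blast
  show ?thesis using p assms(2) by (auto simp: eval_sum eval_mult intro!: sum.neutral)
qed

abbreviation evp :: "(var \<Rightarrow> 'k) \<Rightarrow> 'k::comm_ring_1 mpoly poly \<Rightarrow> 'k poly" where
  "evp a P \<equiv> map_poly (\<lambda>c. eval c a) P"

lemma evp_add: "evp a (P + Q) = evp a P + evp a Q"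
  by (rule poly_eqI) (simp add: coeff_map_poly eval_add)
lemma evp_diff: "evp a (P - Q) = evp a P - evp a Q"
  by (rule poly_eqI) (simp add: coeff_map_poly eval_diff)
lemma evp_mult: "evp a (P * Q) = evp a P * evp a Q"
  by (rule poly_eqI) (simp add: coeff_map_poly coeff_mult eval_sum eval_mult)
lemma evp_1: "evp a 1 = 1" by simp
lemma evp_power: "evp a (P ^ n) = evp a P ^ n"
  by (induction n) (simp_all add: evp_mult)
lemma evp_sum: "evp a (sum f F) = (\<Sum>x\<in>F. evp a (f x))"
  by (induction F rule: infinite_finite_induct) (auto simp: evp_add)
lemma evp_gfun: "evp a (gfun P Q R) = gfun (evp a P) (evp a Q) (evp a R)"
  by (simp add: gfun_def evp_add evp_mult evp_power)
lemma evp_arc: "evp a (arc V m) = (\<Sum>i\<le>m. monom (a (V i)) i)"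
  by (simp add: arc_def evp_sum map_poly_monom)

lemma eval_gj: "eval (gj m j) a =
  coeff (gfun (\<Sum>i\<le>m. monom (a (X i)) i) (\<Sum>i\<le>m. monom (a (Y i)) i) (\<Sum>i\<le>m. monom (a (Z i)) i)) j"
proof -
  have "eval (gj m j) a = coeff (evp a (gfun (arc X m) (arc Y m) (arc Z m))) j"
    by (simp add: gj_def coeff_map_poly)
  then show ?thesis by (simp add: evp_gfun evp_arc)
qed




lemma coeff_arcsum: "coeff (\<Sum>i\<le>n. monom (c i) i) j = (if j \<le> n then c j else 0)"
  by (simp add: coeff_sum)

lemma arcsum_shift: fixes c :: "nat \<Rightarrow> 'r::comm_ring_1" assumes "\<And>i. i < d \<Longrightarrow> c i = 0" "d \<le> n"
  shows "(\<Sum>i\<le>n. monom (c i) i) = monom 1 d * (\<Sum>i\<le>n-d. monom (c (i+d)) i)"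
proof (rule poly_eqI)
  fix j show "coeff (\<Sum>i\<le>n. monom (c i) i) j = coeff (monom 1 d * (\<Sum>i\<le>n - d. monom (c (i + d)) i)) j"
    unfolding coeff_monom_mult coeff_arcsum using assms by auto
qed

lemma coeff_mult_1: "coeff (p * q) (1::nat) = (coeff p 0 * coeff q 1 + coeff p 1 * coeff q 0 :: 'r::comm_ring_1)"
  by (simp add: coeff_mult)
lemma coeff_mult_1_unused: "coeff (p * q) 1 = coeff p 0 * coeff q 1 + coeff p 1 * coeff q 0"
  by (simp add: coeff_mult)

lemma coeff_t_1: "coeff (monom 1 1 * p) 1 = (coeff p 0 :: 'r::comm_ring_1)"
  by (simp add: coeff_monom_mult)

lemma monom_pow_t: "(monom 1 1 :: 'r::comm_ring_1 poly) ^ n = monom 1 n"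
  by (induction n) (simp_all add: mult_monom monom_0 one_pCons)

lemma gfun_sym: "gfun x y z = gfun x z y"
  by (simp add: gfun_def algebra_simps)

lemma id4: "gfun (t^2 * A) (t^2 * B) (t^2 * C) = (t::'r::comm_ring_1)^4 * (A^2 + t^2 * (B^2 * C + B * C^2 + A * B * C))"
  unfolding gfun_def by (simp add: algebra_simps power2_eq_square power4_eq_xxxx)
lemma id5a: "gfun (t^2 * A) (t * B) (t^2 * C) = (t::'r::comm_ring_1)^4 * (A^2 + B^2 * C + t * (B * C^2 + A * B * C))"
  unfolding gfun_def by (simp add: algebra_simps power2_eq_square power4_eq_xxxx)
lemma id5b: "gfun (t^2 * A) (t * B) (t^2 * V - t * B) = (t::'r::comm_ring_1)^4 * (A^2 + B * (t * V - B) * V + A * B * (t * V - B))"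
  unfolding gfun_def by (simp add: algebra_simps power2_eq_square power4_eq_xxxx)

lemma G4: "coeff (gfun (monom 1 2 * A) (monom 1 2 * B) (monom 1 2 * C)) 4 = (coeff A 0 ^ 2 :: 'r::comm_ring_1)"
proof -
  have "gfun (monom 1 2 * A) (monom 1 2 * B) (monom 1 2 * C) = monom 1 4 * (A^2 + monom 1 2 * (B^2 * C + B * C^2 + A * B * C))"
    using id4[of "monom 1 1"] unfolding monom_pow_t power_one_right .
  then show ?thesis
    by (simp add: coeff_monom_mult power2_eq_square coeff_mult_0)
qed

lemma G5a: "coeff (gfun (monom 1 2 * A) (monom 1 1 * B) (monom 1 2 * C)) 5 =
   (coeff B 0 * (coeff C 0^2 + coeff B 0 * coeff C 1 + coeff A 0 * coeff C 0)
   + 2 * (coeff A 0 * coeff A 1 + coeff B 0 * coeff B 1 * coeff C 0) :: 'r::comm_ring_1)"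
proof -
  have "gfun (monom 1 2 * A) (monom 1 1 * B) (monom 1 2 * C) = monom 1 4 * (A^2 + B^2 * C + monom 1 1 * (B * C^2 + A * B * C))"
    using id5a[of "monom 1 1"] unfolding monom_pow_t power_one_right .
  then have "coeff (gfun (monom 1 2 * A) (monom 1 1 * B) (monom 1 2 * C)) 5 = coeff (A^2 + B^2 * C + monom 1 1 * (B * C^2 + A * B * C)) 1"
    by (simp add: coeff_monom_mult)
  also have "\<dots> = coeff A 0 * coeff A 1 + coeff A 1 * coeff A 0 + ((coeff B 0 * coeff B 0) * coeff C 1 + (coeff B 0 * coeff B 1 + coeff B 1 * coeff B 0) * coeff C 0)
     + (coeff B 0 * (coeff C 0 * coeff C 0) + coeff A 0 * coeff B 0 * coeff C 0)"
    by (simp only: coeff_add coeff_t_1 power2_eq_square coeff_mult_1 coeff_mult_0) simp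
  finally show ?thesis by (simp add: algebra_simps power2_eq_square)
qed

lemma G5b: "coeff (gfun (monom 1 2 * A) (monom 1 1 * B) (monom 1 2 * V - monom 1 1 * B)) 5 =
   (coeff B 0 * (- coeff B 1 * coeff V 0 + (coeff V 0 - coeff B 1) * coeff V 0 - coeff B 0 * coeff V 1
      - coeff A 1 * coeff B 0 - coeff A 0 * coeff B 1 + coeff A 0 * (coeff V 0 - coeff B 1))
   + 2 * (coeff A 0 * coeff A 1) :: 'r::comm_ring_1)"
proof -
  have "gfun (monom 1 2 * A) (monom 1 1 * B) (monom 1 2 * V - monom 1 1 * B) = monom 1 4 * (A^2 + B * (monom 1 1 * V - B) * V + A * B * (monom 1 1 * V - B))"
    using id5b[of "monom 1 1"] unfolding monom_pow_t power_one_right .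
  then have "coeff (gfun (monom 1 2 * A) (monom 1 1 * B) (monom 1 2 * V - monom 1 1 * B)) 5 = coeff (A^2 + B * (monom 1 1 * V - B) * V + A * B * (monom 1 1 * V - B)) 1"
    by (simp add: coeff_monom_mult)
  also have "\<dots> = coeff A 0 * coeff A 1 + coeff A 1 * coeff A 0
     + ((coeff B 0 * (coeff V 0 - coeff B 1) + coeff B 1 * (0 - coeff B 0)) * coeff V 0 + (coeff B 0 * (0 - coeff B 0)) * coeff V 1)
     + ((coeff A 0 * coeff B 0) * (coeff V 0 - coeff B 1) + (coeff A 0 * coeff B 1 + coeff A 1 * coeff B 0) * (0 - coeff B 0))"
    by (simp only: coeff_add coeff_diff coeff_t_1 power2_eq_square coeff_mult_1 coeff_mult_0 coeff_monom_mult) simp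
  finally show ?thesis by (simp add: algebra_simps power2_eq_square)
qed




definition PL :: "nat \<Rightarrow> 'k::comm_ring_1 mpoly set \<Rightarrow> 'k mpoly poly set" where
  "PL m S = {P. \<forall>n. coeff P n \<in> ideal_gen m S}"

lemma PL_add: "P \<in> PL m S \<Longrightarrow> Q \<in> PL m S \<Longrightarrow> P + Q \<in> PL m S"
  by (auto simp: PL_def intro: ideal_gen_add)
lemma PL_mult: "P \<in> PL m S \<Longrightarrow> E \<in> PR m \<Longrightarrow> P * E \<in> PL m S"
  unfolding PL_def PR_def
proof (safe)
  fix n assume P: "\<forall>n. coeff P n \<in> ideal_gen m S" and E: "\<forall>n. coeff E n \<in> Rm m"
  show "coeff (P * E) n \<in> ideal_gen m S"
    unfolding coeff_mult
  proof (rule ideal_gen_sum)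
    fix i show "coeff P i * coeff E (n - i) \<in> ideal_gen m S"
      using ideal_gen_mult[OF spec[OF P, of i] spec[OF E, of "n-i"]] by (simp add: mult.commute)
  qed
qed

lemma ap_diff_PL: assumes "\<And>i. i \<le> m \<Longrightarrow> c i - c' i \<in> ideal_gen m S"
  shows "(\<Sum>i\<le>m. monom (c i) i) - (\<Sum>i\<le>m. monom (c' i) i) \<in> PL m (S :: 'k::comm_ring_1 mpoly set)"
  unfolding PL_def using assms by (auto simp: coeff_arcsum ideal_gen_0)

lemma gfun_diff_eq: "gfun P Q R - gfun P' Q' R' =
   (P - P') * (P + P' + Q*R) + (Q - Q') * ((Q+Q')*R + R^2 + P'*R) + (R - R')*(Q'^2 + Q'*(R+R') + P'*Q')"
  unfolding gfun_def by (simp add: algebra_simps power2_eq_square)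

lemma gfun_diff_PL: assumes "P \<in> PR m" "Q \<in> PR m" "R \<in> PR m" "P' \<in> PR m" "Q' \<in> PR m" "R' \<in> PR m"
  "P - P' \<in> PL m S" "Q - Q' \<in> PL m S" "R - R' \<in> PL m S"
  shows "gfun P Q R - gfun P' Q' R' \<in> PL m (S :: 'k::comm_ring_1 mpoly set)"
  unfolding gfun_diff_eq using assms
  by (intro PL_add PL_mult PR_add PR_mult PR_power) auto

lemma two_mpoly: "(2::'k::comm_ring_1) = 0 \<Longrightarrow> (2::'k mpoly) = 0"
  by (metis single_numeral single_zero)

lemma arc_eq: "arc V m = (\<Sum>i\<le>m. monom (Var (V i)) i)"
  by (simp add: arc_def)

lemma Rm_VarX: "i \<le> m \<Longrightarrow> (Var (X i) :: 'k::comm_ring_1 mpoly) \<in> Rm m"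
  and Rm_VarY: "i \<le> m \<Longrightarrow> (Var (Y i) :: 'k::comm_ring_1 mpoly) \<in> Rm m"
  and Rm_VarZ: "i \<le> m \<Longrightarrow> (Var (Z i) :: 'k::comm_ring_1 mpoly) \<in> Rm m"
  by (simp_all add: Rm_Var)

lemma coeff_shift0: "coeff (\<Sum>i\<le>n. monom (c (i+d)) i) 0 = c d"
  by (simp add: coeff_arcsum)
lemma coeff_shift1: "1 \<le> n \<Longrightarrow> coeff (\<Sum>i\<le>n. monom (c (i+d)) i) 1 = c (Suc d)"
  by (simp add: coeff_arcsum)

definition q1 :: "'k::comm_ring_1 mpoly" where
  "q1 = Var (Y 2)^2 + Var (Z 1) * Var (Y 3) + Var (X 2) * Var (Y 2)"
definition q2 :: "'k::comm_ring_1 mpoly" where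
  "q2 = Var (Z 2)^2 + Var (Y 1) * Var (Z 3) + Var (X 2) * Var (Z 2)"
definition q3 :: "'k::comm_ring_1 mpoly" where
  "q3 = - Var (Y 2) * (Var (Y 2) + Var (Z 2)) + ((Var (Y 2) + Var (Z 2)) - Var (Y 2)) * (Var (Y 2) + Var (Z 2))
      - Var (Y 1) * (Var (Y 3) + Var (Z 3)) - Var (X 3) * Var (Y 1) - Var (X 2) * Var (Y 2)
      + Var (X 2) * ((Var (Y 2) + Var (Z 2)) - Var (Y 2))"

lemma q1_Rm: "3 \<le> m \<Longrightarrow> (q1 :: 'k::comm_ring_1 mpoly) \<in> Rm m"
  unfolding q1_def
  by (intro conjI Rm_add Rm_mult Rm_power Rm_diff Rm_uminus Rm_VarX Rm_VarY Rm_VarZ; simp)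

lemma q2_Rm: "3 \<le> m \<Longrightarrow> (q2 :: 'k::comm_ring_1 mpoly) \<in> Rm m"
  unfolding q2_def
  by (intro conjI Rm_add Rm_mult Rm_power Rm_diff Rm_uminus Rm_VarX Rm_VarY Rm_VarZ; simp)

lemma q3_Rm: "3 \<le> m \<Longrightarrow> (q3 :: 'k::comm_ring_1 mpoly) \<in> Rm m"
  unfolding q3_def
  by (intro conjI Rm_add Rm_mult Rm_power Rm_diff Rm_uminus Rm_VarX Rm_VarY Rm_VarZ; simp)

lemma sat_lemma:
  assumes two: "(2::'k::comm_ring_1) = 0"
    and g: "gj m 5 \<in> S"
    and d: "gfun (arc X m) (arc Y m) (arc Z m) - gfun A' B' C' \<in> PL m S"
    and c5: "coeff (gfun A' B' C') 5 = h * q + 2 * e"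
    and q: "q \<in> Rm m"
  shows "(q :: 'k mpoly) \<in> saturate m (ideal_gen m S) h"
proof -
  have "h * q = gj m 5 - coeff (gfun (arc X m) (arc Y m) (arc Z m) - gfun A' B' C') 5"
    using c5 two_mpoly[OF two] by (simp add: gj_def)
  also have "\<dots> \<in> ideal_gen m S"
  proof (rule ideal_gen_diff)
    show "gj m 5 \<in> ideal_gen m S" using g by (rule ideal_gen_gen)
    show "coeff (gfun (arc X m) (arc Y m) (arc Z m) - gfun A' B' C') 5 \<in> ideal_gen m S"
      using d unfolding PL_def by blast
  qed
  finally have "h ^ 1 * q \<in> ideal_gen m S" by simp
  then show ?thesis unfolding saturate_def using q by blast
qed




definition cutv :: "nat \<Rightarrow> (nat \<Rightarrow> var) \<Rightarrow> nat \<Rightarrow> 'k::comm_ring_1 mpoly" where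
  "cutv d V i = (if i < d then 0 else Var (V i))"

lemma cut_Rm: "i \<le> m \<Longrightarrow> V = X \<or> V = Y \<or> V = Z \<Longrightarrow> (cutv d V i :: 'k::comm_ring_1 mpoly) \<in> Rm m"
  unfolding cutv_def by (auto intro: Rm_Var)

lemma cut_PR: "V = X \<or> V = Y \<or> V = Z \<Longrightarrow> (\<Sum>i\<le>m. monom (cutv d V i) i :: 'k::comm_ring_1 mpoly poly) \<in> PR m"
  by (rule PR_arcsum) (rule cut_Rm)

lemma cut_diff: assumes "\<And>i. i < d \<Longrightarrow> Var (V i) \<in> S"
  shows "arc V m - (\<Sum>i\<le>m. monom (cutv d V i) i) \<in> PL m (S :: 'k::comm_ring_1 mpoly set)"
  unfolding arc_eq by (rule ap_diff_PL) (auto simp: cutv_def ideal_gen_0 intro: ideal_gen_gen assms)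

lemma cut_shift: "d \<le> m \<Longrightarrow> (\<Sum>i\<le>m. monom (cutv d V i) i :: 'k::comm_ring_1 mpoly poly)
   = monom 1 d * (\<Sum>i\<le>m-d. monom (Var (V (i+d))) i)"
  by (subst arcsum_shift[of d]) (auto simp: cutv_def)

lemma q2_sat: assumes two: "(2::'k::comm_ring_1) = 0" and m: "m \<ge> 5"
  shows "(q2 :: 'k mpoly) \<in> saturate m (J2 m) (Var (Y 1))"
  unfolding J2_def
proof (rule sat_lemma[OF two])
  let ?S = "{Var (X 0), Var (X 1), Var (Y 0), Var (Z 0), Var (Z 1)} \<union> gens_g m :: 'k mpoly set"
  show "gj m 5 \<in> ?S" using m by (auto simp: gens_g_def)
  show "(q2::'k mpoly) \<in> Rm m" by (rule q2_Rm) (use m in simp)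
  show "gfun (arc X m) (arc Y m) (arc Z m) - gfun (\<Sum>i\<le>m. monom (cutv 2 X i) i) (\<Sum>i\<le>m. monom (cutv 1 Y i) i) (\<Sum>i\<le>m. monom (cutv 2 Z i) i) \<in> PL m ?S"
    apply (rule gfun_diff_PL)
    apply (auto intro!: arc_PR cut_PR cut_diff simp: less_Suc_eq numeral_2_eq_2)
    done
  show "coeff (gfun (\<Sum>i\<le>m. monom (cutv 2 X i) i) (\<Sum>i\<le>m. monom (cutv 1 Y i) i) (\<Sum>i\<le>m. monom (cutv 2 Z i) i)) 5
     = Var (Y 1) * q2 + 2 * (Var (X 2) * Var (X 3) + Var (Y 1) * Var (Y 2) * (Var (Z 2) :: 'k mpoly))"
  proof -
    have e: "(\<Sum>i\<le>m. monom (cutv 2 X i) i :: 'k mpoly poly) = monom 1 2 * (\<Sum>i\<le>m-2. monom (Var (X (i+2))) i)"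
      "(\<Sum>i\<le>m. monom (cutv 1 Y i) i :: 'k mpoly poly) = monom 1 1 * (\<Sum>i\<le>m-1. monom (Var (Y (i+1))) i)"
      "(\<Sum>i\<le>m. monom (cutv 2 Z i) i :: 'k mpoly poly) = monom 1 2 * (\<Sum>i\<le>m-2. monom (Var (Z (i+2))) i)"
      using m by (intro cut_shift; simp)+
    have c: "coeff (\<Sum>i\<le>m-2. monom (Var (X (i+2))) i) 0 = (Var (X 2) :: 'k mpoly)"
       "coeff (\<Sum>i\<le>m-2. monom (Var (X (i+2))) i) 1 = (Var (X 3) :: 'k mpoly)"
       "coeff (\<Sum>i\<le>m-1. monom (Var (Y (i+1))) i) 0 = (Var (Y 1) :: 'k mpoly)"
       "coeff (\<Sum>i\<le>m-1. monom (Var (Y (i+1))) i) 1 = (Var (Y 2) :: 'k mpoly)"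
       "coeff (\<Sum>i\<le>m-2. monom (Var (Z (i+2))) i) 0 = (Var (Z 2) :: 'k mpoly)"
       "coeff (\<Sum>i\<le>m-2. monom (Var (Z (i+2))) i) 1 = (Var (Z 3) :: 'k mpoly)"
      using m by (simp_all add: coeff_arcsum numeral_3_eq_3 numeral_2_eq_2)
    show ?thesis unfolding e G5a c by (simp add: q2_def algebra_simps)
  qed
qed

lemma q1_sat: assumes two: "(2::'k::comm_ring_1) = 0" and m: "m \<ge> 5"
  shows "(q1 :: 'k mpoly) \<in> saturate m (J1 m) (Var (Z 1))"
  unfolding J1_def
proof (rule sat_lemma[OF two])
  let ?S = "{Var (X 0), Var (X 1), Var (Y 0), Var (Y 1), Var (Z 0)} \<union> gens_g m :: 'k mpoly set"
  show "gj m 5 \<in> ?S" using m by (auto simp: gens_g_def)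
  show "(q1::'k mpoly) \<in> Rm m" by (rule q1_Rm) (use m in simp)
  show "gfun (arc X m) (arc Y m) (arc Z m) - gfun (\<Sum>i\<le>m. monom (cutv 2 X i) i) (\<Sum>i\<le>m. monom (cutv 2 Y i) i) (\<Sum>i\<le>m. monom (cutv 1 Z i) i) \<in> PL m ?S"
    apply (rule gfun_diff_PL)
    apply (auto intro!: arc_PR cut_PR cut_diff simp: less_Suc_eq numeral_2_eq_2)
    done
  show "coeff (gfun (\<Sum>i\<le>m. monom (cutv 2 X i) i) (\<Sum>i\<le>m. monom (cutv 2 Y i) i) (\<Sum>i\<le>m. monom (cutv 1 Z i) i)) 5
     = Var (Z 1) * q1 + 2 * (Var (X 2) * Var (X 3) + Var (Z 1) * Var (Z 2) * (Var (Y 2) :: 'k mpoly))"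
  proof -
    have e: "(\<Sum>i\<le>m. monom (cutv 2 X i) i :: 'k mpoly poly) = monom 1 2 * (\<Sum>i\<le>m-2. monom (Var (X (i+2))) i)"
      "(\<Sum>i\<le>m. monom (cutv 1 Z i) i :: 'k mpoly poly) = monom 1 1 * (\<Sum>i\<le>m-1. monom (Var (Z (i+1))) i)"
      "(\<Sum>i\<le>m. monom (cutv 2 Y i) i :: 'k mpoly poly) = monom 1 2 * (\<Sum>i\<le>m-2. monom (Var (Y (i+2))) i)"
      using m by (intro cut_shift; simp)+
    have c: "coeff (\<Sum>i\<le>m-2. monom (Var (X (i+2))) i) 0 = (Var (X 2) :: 'k mpoly)"
       "coeff (\<Sum>i\<le>m-2. monom (Var (X (i+2))) i) 1 = (Var (X 3) :: 'k mpoly)"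
       "coeff (\<Sum>i\<le>m-1. monom (Var (Z (i+1))) i) 0 = (Var (Z 1) :: 'k mpoly)"
       "coeff (\<Sum>i\<le>m-1. monom (Var (Z (i+1))) i) 1 = (Var (Z 2) :: 'k mpoly)"
       "coeff (\<Sum>i\<le>m-2. monom (Var (Y (i+2))) i) 0 = (Var (Y 2) :: 'k mpoly)"
       "coeff (\<Sum>i\<le>m-2. monom (Var (Y (i+2))) i) 1 = (Var (Y 3) :: 'k mpoly)"
      using m by (simp_all add: coeff_arcsum numeral_3_eq_3 numeral_2_eq_2)
    have sw: "coeff (gfun (\<Sum>i\<le>m. monom (cutv 2 X i) i) (\<Sum>i\<le>m. monom (cutv 2 Y i) i) (\<Sum>i\<le>m. monom (cutv 1 Z i) i :: 'k mpoly poly)) 5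
      = coeff (gfun (\<Sum>i\<le>m. monom (cutv 2 X i) i) (\<Sum>i\<le>m. monom (cutv 1 Z i) i) (\<Sum>i\<le>m. monom (cutv 2 Y i) i)) (5::nat)"
      by (rule arg_cong[where f="\<lambda>p. coeff p 5"], rule gfun_sym)
    show ?thesis unfolding sw unfolding e G5a c by (simp add: q1_def algebra_simps)
  qed
qed

definition c3 :: "nat \<Rightarrow> 'k::comm_ring_1 mpoly" where
  "c3 i = (if i = 0 then 0 else if i = 1 then - Var (Y 1) else Var (Z i))"

lemma q3_sat: assumes two: "(2::'k::comm_ring_1) = 0" and m: "m \<ge> 5"
  shows "(q3 :: 'k mpoly) \<in> saturate m (J3 m) (Var (Y 1))"
  unfolding J3_def
proof (rule sat_lemma[OF two])
  let ?S = "{Var (X 0), Var (X 1), Var (Y 0), Var (Z 0), Var (Y 1) + Var (Z 1)} \<union> gens_g m :: 'k mpoly set"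
  show "gj m 5 \<in> ?S" using m by (auto simp: gens_g_def)
  show "(q3::'k mpoly) \<in> Rm m" by (rule q3_Rm) (use m in simp)
  have C'PR: "(\<Sum>i\<le>m. monom (c3 i) i :: 'k mpoly poly) \<in> PR m"
    by (rule PR_arcsum) (auto simp: c3_def intro!: Rm_uminus Rm_Var)
  have C'PL: "arc Z m - (\<Sum>i\<le>m. monom (c3 i) i :: 'k mpoly poly) \<in> PL m ?S"
    unfolding arc_eq by (rule ap_diff_PL) (auto simp: c3_def ideal_gen_0 add.commute intro: ideal_gen_gen)
  show "gfun (arc X m) (arc Y m) (arc Z m) - gfun (\<Sum>i\<le>m. monom (cutv 2 X i) i) (\<Sum>i\<le>m. monom (cutv 1 Y i) i) (\<Sum>i\<le>m. monom (c3 i) i) \<in> PL m ?S"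
    apply (rule gfun_diff_PL[OF _ _ _ _ _ C'PR _ _ C'PL])
    apply (auto intro!: arc_PR cut_PR cut_diff simp: less_Suc_eq numeral_2_eq_2)
    done
  show "coeff (gfun (\<Sum>i\<le>m. monom (cutv 2 X i) i) (\<Sum>i\<le>m. monom (cutv 1 Y i) i) (\<Sum>i\<le>m. monom (c3 i) i)) 5
     = Var (Y 1) * q3 + 2 * (Var (X 2) * (Var (X 3) :: 'k mpoly))"
  proof -
    have e: "(\<Sum>i\<le>m. monom (cutv 2 X i) i :: 'k mpoly poly) = monom 1 2 * (\<Sum>i\<le>m-2. monom (Var (X (i+2))) i)"
      "(\<Sum>i\<le>m. monom (cutv 1 Y i) i :: 'k mpoly poly) = monom 1 1 * (\<Sum>i\<le>m-1. monom (Var (Y (i+1))) i)"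
      using m by (intro cut_shift; simp)+
    have ss: "\<And>j::nat. \<not> j < 2 \<Longrightarrow> Suc (Suc (j - 2)) = j" by arith
    have e3: "(\<Sum>i\<le>m. monom (c3 i) i :: 'k mpoly poly) = monom 1 2 * (\<Sum>i\<le>m-2. monom (Var (Y (i+2)) + Var (Z (i+2))) i)
       - monom 1 1 * (\<Sum>i\<le>m-1. monom (Var (Y (i+1))) i)"
    proof (rule poly_eqI)
      fix j show "coeff (\<Sum>i\<le>m. monom (c3 i) i :: 'k mpoly poly) j = coeff (monom 1 2 * (\<Sum>i\<le>m-2. monom (Var (Y (i+2)) + Var (Z (i+2))) i)
       - monom 1 1 * (\<Sum>i\<le>m-1. monom (Var (Y (i+1))) i)) j"
        unfolding coeff_diff coeff_monom_mult coeff_arcsum using m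
        using ss by (cases "j = 0"; cases "j = 1") (auto simp: c3_def)
    qed
    have c: "coeff (\<Sum>i\<le>m-2. monom (Var (X (i+2))) i) 0 = (Var (X 2) :: 'k mpoly)"
       "coeff (\<Sum>i\<le>m-2. monom (Var (X (i+2))) i) 1 = (Var (X 3) :: 'k mpoly)"
       "coeff (\<Sum>i\<le>m-1. monom (Var (Y (i+1))) i) 0 = (Var (Y 1) :: 'k mpoly)"
       "coeff (\<Sum>i\<le>m-1. monom (Var (Y (i+1))) i) 1 = (Var (Y 2) :: 'k mpoly)"
       "coeff (\<Sum>i\<le>m-2. monom (Var (Y (i+2)) + Var (Z (i+2))) i) 0 = (Var (Y 2) + Var (Z 2) :: 'k mpoly)"
       "coeff (\<Sum>i\<le>m-2. monom (Var (Y (i+2)) + Var (Z (i+2))) i) 1 = (Var (Y 3) + Var (Z 3) :: 'k mpoly)"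
      using m by (simp_all add: coeff_arcsum numeral_3_eq_3 numeral_2_eq_2)
    show ?thesis unfolding e e3 G5b c by (simp add: q3_def algebra_simps)
  qed
qed




lemma alg_closed_infinite: assumes "alg_closed TYPE('k::field)" shows "infinite (UNIV :: 'k set)"
proof
  assume fin: "finite (UNIV :: 'k set)"
  define P :: "'k poly" where "P = 1 + (\<Prod>a\<in>UNIV. [:-a, 1:])"
  have "degree (\<Prod>a\<in>(UNIV::'k set). [:-a, 1:]) = card (UNIV :: 'k set)"
    by (subst degree_prod_sum_eq) auto
  moreover have "card (UNIV :: 'k set) > 0" using fin by (simp add: finite_UNIV_card_ge_0)
  ultimately have "degree P > 0" unfolding P_def
    by (subst degree_add_eq_right) auto
  then obtain x where "poly P x = 0" using assms unfolding alg_closed_def by blast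
  moreover have "poly (\<Prod>a\<in>(UNIV::'k set). [:-a, 1:]) x = 0"
    unfolding poly_prod using fin by (intro prod_zero) auto
  ultimately show False unfolding P_def by simp
qed

lemma eval_polyfam: "\<exists>Q. \<forall>s. eval p (\<lambda>v. poly (qv v) s) = poly Q (s::'k::comm_ring_1)"
proof
  show "\<forall>s. eval p (\<lambda>v. poly (qv v) s) = poly (\<Sum>mo\<in>Poly_Mapping.keys p. [:Poly_Mapping.lookup p mo:] *
      (\<Prod>v\<in>Poly_Mapping.keys mo. qv v ^ Poly_Mapping.lookup mo v)) s"
    by (simp add: eval_def poly_sum poly_prod poly_power)
qed

lemma closure_pt:
  assumes inf: "infinite (UNIV :: 'k::field set)"
    and hz: "\<And>s r. s \<noteq> 0 \<Longrightarrow> r \<in> J \<Longrightarrow> eval r (a s) = 0"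
    and hh: "\<And>s. s \<noteq> 0 \<Longrightarrow> eval h (a s) \<noteq> 0"
    and pl: "\<And>s. a s = (\<lambda>v. poly (qv v) s)"
    and p: "p \<in> saturate m J h"
  shows "eval p (a (0::'k)) = 0"
proof -
  obtain n where n: "h ^ n * p \<in> J" using p unfolding saturate_def by blast
  have z: "eval p (a s) = 0" if "s \<noteq> 0" for s
    using hz[OF that n] hh[OF that] by (simp add: eval_mult eval_power)
  obtain Q where Q: "\<And>s. eval p (\<lambda>v. poly (qv v) s) = poly Q s" using eval_polyfam by blast
  have "Q = 0"
  proof (rule ccontr)
    assume "Q \<noteq> 0"
    then have "finite {s. poly Q s = 0}" by (rule poly_roots_finite)
    moreover have "UNIV - {0} \<subseteq> {s. poly Q s = 0}" using z Q pl by auto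
    ultimately have "finite (UNIV - {0::'k})" by (rule finite_subset[rotated])
    then show False using inf by simp
  qed
  then show ?thesis using Q[of 0] pl[of 0] by simp
qed

lemma gen_sat: "s \<in> S \<Longrightarrow> S \<subseteq> Rm m \<Longrightarrow> (s :: 'k::comm_ring_1 mpoly) \<in> saturate m (ideal_gen m S) h"
  unfolding saturate_def using ideal_gen_gen[of s S m] by (intro CollectI conjI exI[of _ 0]) auto

lemma gens_Rm: "gens_g m \<subseteq> (Rm m :: 'k::comm_ring_1 mpoly set)"
  using gj_Rm by (auto simp: gens_g_def)

lemma gfun_zero_X: "gfun 0 B 0 = (0::'r::comm_ring_1)" "gfun 0 0 C = (0::'r)"
  by (simp_all add: gfun_def)

lemma gfun_char2: "(2::'k::field) = 0 \<Longrightarrow> gfun 0 C C = (0::'k poly)"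
proof -
  assume "(2::'k) = 0"
  then have "(2::'k poly) = 0" by (simp add: numeral_poly)
  moreover have "gfun 0 C C = 2 * C^3" by (simp add: gfun_def algebra_simps power2_eq_square power3_eq_cube)
  ultimately show ?thesis by simp
qed

lemma arcsum_zero: "(\<And>i. c i = 0) \<Longrightarrow> (\<Sum>i\<le>m. monom (c i) i) = 0"
  by simp




lemma abstract_max:
  fixes A :: "nat \<Rightarrow> 'a set"
  assumes s12: "A 1 \<inter> A 2 \<subseteq> A 0" and s23: "A 2 \<inter> A 3 \<subseteq> A 0" and s31: "A 3 \<inter> A 1 \<subseteq> A 0"
    and p1: "p1 \<in> A 0" "p1 \<in> A 1" "p1 \<notin> A 2" "p1 \<notin> A 3"
    and p2: "p2 \<in> A 0" "p2 \<in> A 2" "p2 \<notin> A 1" "p2 \<notin> A 3"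
    and p3: "p3 \<in> A 0" "p3 \<in> A 3" "p3 \<notin> A 1" "p3 \<notin> A 2"
  shows "maximal_elements {A i \<inter> A j | i j. i \<le> 3 \<and> j \<le> 3 \<and> i \<noteq> j}
           = {A 0 \<inter> A 1, A 0 \<inter> A 2, A 0 \<inter> A 3}
    \<and> A 0 \<inter> A 1 \<noteq> A 0 \<inter> A 2
    \<and> A 0 \<inter> A 2 \<noteq> A 0 \<inter> A 3
    \<and> A 0 \<inter> A 1 \<noteq> A 0 \<inter> A 3
    \<and> A 1 \<inter> A 2 \<subset> A 0
    \<and> A 2 \<inter> A 3 \<subset> A 0
    \<and> A 3 \<inter> A 1 \<subset> A 0"
proof -
  have le3: "i \<le> 3 \<longleftrightarrow> i = 0 \<or> i = 1 \<or> i = 2 \<or> i = (3::nat)" for i by auto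
  have F: "{A i \<inter> A j | i j. i \<le> 3 \<and> j \<le> 3 \<and> i \<noteq> j} =
     {A 0 \<inter> A 1, A 0 \<inter> A 2, A 0 \<inter> A 3, A 1 \<inter> A 2, A 2 \<inter> A 3, A 3 \<inter> A 1}"
  proof (rule set_eqI, rule iffI)
    fix S assume "S \<in> {A i \<inter> A j | i j. i \<le> 3 \<and> j \<le> 3 \<and> i \<noteq> j}"
    then obtain i j where "S = A i \<inter> A j" "i \<le> 3" "j \<le> 3" "i \<noteq> j" by blast
    then show "S \<in> {A 0 \<inter> A 1, A 0 \<inter> A 2, A 0 \<inter> A 3, A 1 \<inter> A 2, A 2 \<inter> A 3, A 3 \<inter> A 1}"
      unfolding le3 by (elim disjE) (auto simp: Int_commute)
  next
    fix S assume "S \<in> {A 0 \<inter> A 1, A 0 \<inter> A 2, A 0 \<inter> A 3, A 1 \<inter> A 2, A 2 \<inter> A 3, A 3 \<inter> A 1}"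
    then show "S \<in> {A i \<inter> A j | i j. i \<le> 3 \<and> j \<le> 3 \<and> i \<noteq> j}"
    proof (elim insertE emptyE)
      assume "S = A 0 \<inter> A 1" then show ?thesis by (intro CollectI exI[of _ 0] exI[of _ 1]) simp
    next
      assume "S = A 0 \<inter> A 2" then show ?thesis by (intro CollectI exI[of _ 0] exI[of _ 2]) simp
    next
      assume "S = A 0 \<inter> A 3" then show ?thesis by (intro CollectI exI[of _ 0] exI[of _ 3]) simp
    next
      assume "S = A 1 \<inter> A 2" then show ?thesis by (intro CollectI exI[of _ 1] exI[of _ 2]) simp
    next
      assume "S = A 2 \<inter> A 3" then show ?thesis by (intro CollectI exI[of _ 2] exI[of _ 3]) simp
    next
      assume "S = A 3 \<inter> A 1" then show ?thesis by (intro CollectI exI[of _ 3] exI[of _ 1]) simp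
    qed
  qed
  have m1: "A 0 \<inter> A 1 \<in> maximal_elements {A 0 \<inter> A 1, A 0 \<inter> A 2, A 0 \<inter> A 3, A 1 \<inter> A 2, A 2 \<inter> A 3, A 3 \<inter> A 1}"
    unfolding maximal_elements_def using p1 by blast
  have m2: "A 0 \<inter> A 2 \<in> maximal_elements {A 0 \<inter> A 1, A 0 \<inter> A 2, A 0 \<inter> A 3, A 1 \<inter> A 2, A 2 \<inter> A 3, A 3 \<inter> A 1}"
    unfolding maximal_elements_def using p2 by blast
  have m3: "A 0 \<inter> A 3 \<in> maximal_elements {A 0 \<inter> A 1, A 0 \<inter> A 2, A 0 \<inter> A 3, A 1 \<inter> A 2, A 2 \<inter> A 3, A 3 \<inter> A 1}"
    unfolding maximal_elements_def using p3 by blast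
  have n1: "A 1 \<inter> A 2 \<notin> maximal_elements {A 0 \<inter> A 1, A 0 \<inter> A 2, A 0 \<inter> A 3, A 1 \<inter> A 2, A 2 \<inter> A 3, A 3 \<inter> A 1}"
  proof
    assume "A 1 \<inter> A 2 \<in> maximal_elements {A 0 \<inter> A 1, A 0 \<inter> A 2, A 0 \<inter> A 3, A 1 \<inter> A 2, A 2 \<inter> A 3, A 3 \<inter> A 1}"
    then have "A 1 \<inter> A 2 \<subseteq> A 0 \<inter> A 1 \<longrightarrow> A 1 \<inter> A 2 = A 0 \<inter> A 1" unfolding maximal_elements_def by blast
    then have "A 1 \<inter> A 2 = A 0 \<inter> A 1" using s12 by blast
    then show False using p1 by blast
  qed
  have n2: "A 2 \<inter> A 3 \<notin> maximal_elements {A 0 \<inter> A 1, A 0 \<inter> A 2, A 0 \<inter> A 3, A 1 \<inter> A 2, A 2 \<inter> A 3, A 3 \<inter> A 1}"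
  proof
    assume "A 2 \<inter> A 3 \<in> maximal_elements {A 0 \<inter> A 1, A 0 \<inter> A 2, A 0 \<inter> A 3, A 1 \<inter> A 2, A 2 \<inter> A 3, A 3 \<inter> A 1}"
    then have "A 2 \<inter> A 3 \<subseteq> A 0 \<inter> A 2 \<longrightarrow> A 2 \<inter> A 3 = A 0 \<inter> A 2" unfolding maximal_elements_def by blast
    then have "A 2 \<inter> A 3 = A 0 \<inter> A 2" using s23 by blast
    then show False using p2 by blast
  qed
  have n3: "A 3 \<inter> A 1 \<notin> maximal_elements {A 0 \<inter> A 1, A 0 \<inter> A 2, A 0 \<inter> A 3, A 1 \<inter> A 2, A 2 \<inter> A 3, A 3 \<inter> A 1}"
  proof
    assume "A 3 \<inter> A 1 \<in> maximal_elements {A 0 \<inter> A 1, A 0 \<inter> A 2, A 0 \<inter> A 3, A 1 \<inter> A 2, A 2 \<inter> A 3, A 3 \<inter> A 1}"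
    then have "A 3 \<inter> A 1 \<subseteq> A 0 \<inter> A 3 \<longrightarrow> A 3 \<inter> A 1 = A 0 \<inter> A 3" unfolding maximal_elements_def by blast
    then have "A 3 \<inter> A 1 = A 0 \<inter> A 3" using s31 by blast
    then show False using p3 by blast
  qed
  have sub: "maximal_elements S \<subseteq> S" for S :: "'a set set" unfolding maximal_elements_def by blast
  have "maximal_elements {A 0 \<inter> A 1, A 0 \<inter> A 2, A 0 \<inter> A 3, A 1 \<inter> A 2, A 2 \<inter> A 3, A 3 \<inter> A 1}
     = {A 0 \<inter> A 1, A 0 \<inter> A 2, A 0 \<inter> A 3}"
  proof (rule set_eqI, rule iffI)
    fix S assume S: "S \<in> maximal_elements {A 0 \<inter> A 1, A 0 \<inter> A 2, A 0 \<inter> A 3, A 1 \<inter> A 2, A 2 \<inter> A 3, A 3 \<inter> A 1}"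
    then have "S \<in> {A 0 \<inter> A 1, A 0 \<inter> A 2, A 0 \<inter> A 3, A 1 \<inter> A 2, A 2 \<inter> A 3, A 3 \<inter> A 1}" using sub by blast
    then show "S \<in> {A 0 \<inter> A 1, A 0 \<inter> A 2, A 0 \<inter> A 3}" using S n1 n2 n3 by blast
  next
    fix S assume "S \<in> {A 0 \<inter> A 1, A 0 \<inter> A 2, A 0 \<inter> A 3}"
    then show "S \<in> maximal_elements {A 0 \<inter> A 1, A 0 \<inter> A 2, A 0 \<inter> A 3, A 1 \<inter> A 2, A 2 \<inter> A 3, A 3 \<inter> A 1}"
      using m1 m2 m3 by blast
  qed
  moreover have "A 0 \<inter> A 1 \<noteq> A 0 \<inter> A 2" using p1 by blast
  moreover have "A 0 \<inter> A 2 \<noteq> A 0 \<inter> A 3" using p2 by blast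
  moreover have "A 0 \<inter> A 1 \<noteq> A 0 \<inter> A 3" using p1 by blast
  moreover have "A 1 \<inter> A 2 \<subset> A 0" using s12 p1 by blast
  moreover have "A 2 \<inter> A 3 \<subset> A 0" using s23 p1 by blast
  moreover have "A 3 \<inter> A 1 \<subset> A 0" using s31 p2 by blast
  ultimately show ?thesis unfolding F by blast
qed




definition pt1 :: "'k::field \<Rightarrow> var \<Rightarrow> 'k" where
  "pt1 s = (\<lambda>v. if v = Z 1 then s else if v = Z 2 then 1 else 0)"
definition pt2 :: "'k::field \<Rightarrow> var \<Rightarrow> 'k" where
  "pt2 s = (\<lambda>v. if v = Y 1 then s else if v = Y 2 then 1 else 0)"
definition pt3 :: "'k::field \<Rightarrow> var \<Rightarrow> 'k" where
  "pt3 s = (\<lambda>v. if v = Y 1 \<or> v = Z 1 then s else if v = Y 2 \<or> v = Z 2 then 1 else 0)"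

lemma pt_points: "m \<ge> 2 \<Longrightarrow> pt1 s \<in> points m \<and> pt2 s \<in> points m \<and> pt3 s \<in> points m"
  unfolding points_def pt1_def pt2_def pt3_def by auto

lemma gj_pt1: "eval (gj m j) (pt1 s) = 0"
  by (simp add: eval_gj pt1_def gfun_zero_X)
lemma gj_pt2: "eval (gj m j) (pt2 s) = 0"
  by (simp add: eval_gj pt2_def gfun_zero_X)
lemma gj_pt3: assumes "(2::'k::field) = 0" shows "eval (gj m j) (pt3 (s::'k)) = 0"
proof -
  have "(\<Sum>i\<le>m. monom (pt3 s (Y i)) i) = (\<Sum>i\<le>m. monom (pt3 s (Z i)) i)"
    by (rule sum.cong) (auto simp: pt3_def)
  moreover have "(\<Sum>i\<le>m. monom (pt3 s (X i)) i) = 0" by (simp add: pt3_def)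
  ultimately show ?thesis by (simp add: eval_gj gfun_char2[OF assms])
qed

lemma in_Z0: assumes "a \<in> points m" "a (X 0) = 0" "a (X 1) = 0" "a (X 2) = 0" "a (Y 0) = 0" "a (Y 1) = 0"
  "a (Z 0) = 0" "a (Z 1) = 0" "\<And>j. j \<le> m \<Longrightarrow> eval (gj m j) a = (0::'k::field)"
  shows "a \<in> Zc m 0"
  unfolding Zc_def Iset_def zero_set_def I0_def using assms
  by (auto elim!: ideal_gen_eval simp: gens_g_def)

lemma x2_zero: assumes "a (X 0) = 0" "a (X 1) = 0" "a (Y 0) = 0" "a (Y 1) = 0"
  "a (Z 0) = 0" "a (Z 1) = 0" "eval (gj m 4) a = (0::'k::field)" "m \<ge> 5"
  shows "a (X 2) = 0"
proof -
  have e: "(\<Sum>i\<le>m. monom (a (V i)) i) = monom 1 2 * (\<Sum>i\<le>m-2. monom (a (V (i+2))) i)"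
    if "V = X \<or> V = Y \<or> V = Z" for V
    using that assms by (intro arcsum_shift) (auto simp: less_Suc_eq numeral_2_eq_2)
  have "eval (gj m 4) a = a (X 2) ^ 2"
    unfolding eval_gj e[of X, simplified] e[of Y, simplified] e[of Z, simplified] G4
    by (simp add: coeff_arcsum numeral_2_eq_2)
  then show ?thesis using assms(7) by simp
qed

lemma S1_Rm: "m \<ge> 1 \<Longrightarrow> {Var (X 0), Var (X 1), Var (Y 0), Var (Y 1), Var (Z 0)} \<union> gens_g m \<subseteq> (Rm m :: 'k::comm_ring_1 mpoly set)"
  using gens_Rm by (auto intro!: Rm_Var)
lemma S2_Rm: "m \<ge> 1 \<Longrightarrow> {Var (X 0), Var (X 1), Var (Y 0), Var (Z 0), Var (Z 1)} \<union> gens_g m \<subseteq> (Rm m :: 'k::comm_ring_1 mpoly set)"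
  using gens_Rm by (auto intro!: Rm_Var)
lemma S3_Rm: "m \<ge> 1 \<Longrightarrow> {Var (X 0), Var (X 1), Var (Y 0), Var (Z 0), Var (Y 1) + Var (Z 1)} \<union> gens_g m \<subseteq> (Rm m :: 'k::comm_ring_1 mpoly set)"
  using gens_Rm by (auto intro!: Rm_Var Rm_add)

lemma Z1_facts: assumes "a \<in> Zc m 1" "m \<ge> 1"
  shows "a \<in> points m \<and> a (X 0) = 0 \<and> a (X 1) = 0 \<and> a (Y 0) = 0 \<and> a (Y 1) = 0 \<and> a (Z 0) = 0
     \<and> (\<forall>j\<le>m. eval (gj m j) a = (0::'k::field))"
proof -
  have h: "\<And>s. s \<in> {Var (X 0), Var (X 1), Var (Y 0), Var (Y 1), Var (Z 0)} \<union> gens_g m \<Longrightarrow> eval s a = 0"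
    using assms(1) unfolding Zc_def Iset_def zero_set_def J1_def
    using gen_sat[OF _ S1_Rm[OF assms(2)]] by auto
  show ?thesis using assms(1) h[of "Var (X 0)"] h[of "Var (X 1)"] h[of "Var (Y 0)"] h[of "Var (Y 1)"] h[of "Var (Z 0)"]
    h[of "gj m _"] unfolding Zc_def zero_set_def by (auto simp: gens_g_def)
qed

lemma Z2_facts: assumes "a \<in> Zc m 2" "m \<ge> 1"
  shows "a \<in> points m \<and> a (X 0) = 0 \<and> a (X 1) = 0 \<and> a (Y 0) = 0 \<and> a (Z 1) = 0 \<and> a (Z 0) = 0
     \<and> (\<forall>j\<le>m. eval (gj m j) a = (0::'k::field))"
proof -
  have h: "\<And>s. s \<in> {Var (X 0), Var (X 1), Var (Y 0), Var (Z 0), Var (Z 1)} \<union> gens_g m \<Longrightarrow> eval s a = 0"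
    using assms(1) unfolding Zc_def Iset_def zero_set_def J2_def
    using gen_sat[OF _ S2_Rm[OF assms(2)]] by auto
  show ?thesis using assms(1) h[of "Var (X 0)"] h[of "Var (X 1)"] h[of "Var (Y 0)"] h[of "Var (Z 0)"] h[of "Var (Z 1)"]
    h[of "gj m _"] unfolding Zc_def zero_set_def by (auto simp: gens_g_def)
qed

lemma Z3_facts: assumes "a \<in> Zc m 3" "m \<ge> 1"
  shows "a \<in> points m \<and> a (X 0) = 0 \<and> a (X 1) = 0 \<and> a (Y 0) = 0 \<and> a (Y 1) + a (Z 1) = 0 \<and> a (Z 0) = 0
     \<and> (\<forall>j\<le>m. eval (gj m j) a = (0::'k::field))"
proof -
  have h: "\<And>s. s \<in> {Var (X 0), Var (X 1), Var (Y 0), Var (Z 0), Var (Y 1) + Var (Z 1)} \<union> gens_g m \<Longrightarrow> eval s a = 0"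
    using assms(1) unfolding Zc_def Iset_def zero_set_def J3_def
    using gen_sat[OF _ S3_Rm[OF assms(2)]] by auto
  show ?thesis using assms(1) h[of "Var (X 0)"] h[of "Var (X 1)"] h[of "Var (Y 0)"] h[of "Var (Z 0)"] h[of "Var (Y 1) + Var (Z 1)"]
    h[of "gj m _"] unfolding Zc_def zero_set_def by (auto simp: gens_g_def eval_add)
qed




lemma Iset_123: "Iset m 1 = saturate m (J1 m) (Var (Z 1))" "Iset m 2 = saturate m (J2 m) (Var (Y 1))"
  "Iset m 3 = saturate m (J3 m) (Var (Y 1))"
  by (simp_all add: Iset_def)

lemma pt1_Z1: assumes inf: "infinite (UNIV :: 'k::field set)" and m: "m \<ge> 5"
  shows "(pt1 0 :: var \<Rightarrow> 'k) \<in> Zc m 1"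
  unfolding Zc_def Iset_123 zero_set_def
proof (intro CollectI conjI ballI)
  show "(pt1 0 :: var \<Rightarrow> 'k) \<in> points m" using pt_points[of m 0] m by auto
  fix p :: "'k mpoly" assume p: "p \<in> saturate m (J1 m) (Var (Z 1))"
  show "eval p (pt1 0 :: var \<Rightarrow> 'k) = 0"
  proof (rule closure_pt[OF inf _ _ _ p])
    fix s :: 'k and r :: "'k mpoly" assume "s \<noteq> 0" "r \<in> J1 m"
    then show "eval r (pt1 s) = 0" unfolding J1_def
      by (elim ideal_gen_eval) (auto simp: gens_g_def gj_pt1, auto simp: pt1_def)
  next
    fix s :: 'k assume "s \<noteq> 0" then show "eval (Var (Z 1)) (pt1 s) \<noteq> 0" by (simp add: pt1_def)
  next
    fix s :: 'k show "pt1 s = (\<lambda>v. poly (if v = Z 1 then [:0,1:] else if v = Z 2 then 1 else 0) s)"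
      by (auto simp: pt1_def fun_eq_iff)
  qed
qed

lemma pt2_Z2: assumes inf: "infinite (UNIV :: 'k::field set)" and m: "m \<ge> 5"
  shows "(pt2 0 :: var \<Rightarrow> 'k) \<in> Zc m 2"
  unfolding Zc_def Iset_123 zero_set_def
proof (intro CollectI conjI ballI)
  show "(pt2 0 :: var \<Rightarrow> 'k) \<in> points m" using pt_points[of m 0] m by auto
  fix p :: "'k mpoly" assume p: "p \<in> saturate m (J2 m) (Var (Y 1))"
  show "eval p (pt2 0 :: var \<Rightarrow> 'k) = 0"
  proof (rule closure_pt[OF inf _ _ _ p])
    fix s :: 'k and r :: "'k mpoly" assume "s \<noteq> 0" "r \<in> J2 m"
    then show "eval r (pt2 s) = 0" unfolding J2_def
      by (elim ideal_gen_eval) (auto simp: gens_g_def gj_pt2, auto simp: pt2_def)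
  next
    fix s :: 'k assume "s \<noteq> 0" then show "eval (Var (Y 1)) (pt2 s) \<noteq> 0" by (simp add: pt2_def)
  next
    fix s :: 'k show "pt2 s = (\<lambda>v. poly (if v = Y 1 then [:0,1:] else if v = Y 2 then 1 else 0) s)"
      by (auto simp: pt2_def fun_eq_iff)
  qed
qed

lemma pt3_Z3: assumes inf: "infinite (UNIV :: 'k::field set)" and m: "m \<ge> 5" and two: "(2::'k) = 0"
  shows "(pt3 0 :: var \<Rightarrow> 'k) \<in> Zc m 3"
  unfolding Zc_def Iset_123 zero_set_def
proof (intro CollectI conjI ballI)
  show "(pt3 0 :: var \<Rightarrow> 'k) \<in> points m" using pt_points[of m 0] m by auto
  fix p :: "'k mpoly" assume p: "p \<in> saturate m (J3 m) (Var (Y 1))"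
  have ss: "s + s = 0" for s :: 'k using two by (metis mult_2 mult_zero_left)
  show "eval p (pt3 0 :: var \<Rightarrow> 'k) = 0"
  proof (rule closure_pt[OF inf _ _ _ p])
    fix s :: 'k and r :: "'k mpoly" assume "s \<noteq> 0" "r \<in> J3 m"
    then show "eval r (pt3 s) = 0" unfolding J3_def
      by (elim ideal_gen_eval) (auto simp: gens_g_def gj_pt3[OF two], auto simp: pt3_def eval_add ss)
  next
    fix s :: 'k assume "s \<noteq> 0" then show "eval (Var (Y 1)) (pt3 s) \<noteq> 0" by (simp add: pt3_def)
  next
    fix s :: 'k show "pt3 s = (\<lambda>v. poly (if v = Y 1 \<or> v = Z 1 then [:0,1:] else if v = Y 2 \<or> v = Z 2 then 1 else 0) s)"
      by (auto simp: pt3_def fun_eq_iff)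
  qed
qed

lemma pts_Z0: assumes m: "m \<ge> 5" and two: "(2::'k::field) = 0"
  shows "(pt1 0 :: var \<Rightarrow> 'k) \<in> Zc m 0" "(pt2 0 :: var \<Rightarrow> 'k) \<in> Zc m 0" "(pt3 0 :: var \<Rightarrow> 'k) \<in> Zc m 0"
  using pt_points[of m] m
  by (auto intro!: in_Z0 simp: gj_pt1 gj_pt2 gj_pt3[OF two], auto simp: pt1_def pt2_def pt3_def)

lemma not_in: assumes "q \<in> Iset m i" "eval q a \<noteq> (0::'k::field)" shows "a \<notin> Zc m i"
  using assms unfolding Zc_def zero_set_def by auto

lemma sat_Iset: assumes two: "(2::'k::field) = 0" and m: "m \<ge> 5"
  shows "(q1::'k mpoly) \<in> Iset m 1" "(q2::'k mpoly) \<in> Iset m 2" "(q3::'k mpoly) \<in> Iset m 3"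
  using q1_sat[OF two m] q2_sat[OF two m] q3_sat[OF two m] by (simp_all add: Iset_def)

lemma evals:
  "eval (q2::'k::field mpoly) (pt1 0) = 1" "eval (q3::'k mpoly) (pt1 0) = 1"
  "eval (q1::'k mpoly) (pt2 0) = 1" "eval (q3::'k mpoly) (pt2 0) = -1"
  "eval (q1::'k mpoly) (pt3 0) = 1" "eval (q2::'k mpoly) (pt3 0) = 1"
  by (simp_all add: q1_def q2_def q3_def pt1_def pt2_def pt3_def eval_add eval_mult eval_diff eval_uminus eval_power)

theorem theorem4p13:
  fixes m :: nat
  assumes "alg_closed TYPE('k::field)"
    and "(2::'k) = 0"
    and "m \<ge> 5"
  shows "maximal_elements {(Zc m i \<inter> Zc m j :: (var \<Rightarrow> 'k) set) | i j. i \<le> 3 \<and> j \<le> 3 \<and> i \<noteq> j}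
           = {Zc m 0 \<inter> Zc m 1, Zc m 0 \<inter> Zc m 2, Zc m 0 \<inter> Zc m 3}
    \<and> Zc m 0 \<inter> Zc m 1 \<noteq> (Zc m 0 \<inter> Zc m 2 :: (var \<Rightarrow> 'k) set)
    \<and> Zc m 0 \<inter> Zc m 2 \<noteq> (Zc m 0 \<inter> Zc m 3 :: (var \<Rightarrow> 'k) set)
    \<and> Zc m 0 \<inter> Zc m 1 \<noteq> (Zc m 0 \<inter> Zc m 3 :: (var \<Rightarrow> 'k) set)
    \<and> Zc m 1 \<inter> Zc m 2 \<subset> (Zc m 0 :: (var \<Rightarrow> 'k) set)
    \<and> Zc m 2 \<inter> Zc m 3 \<subset> (Zc m 0 :: (var \<Rightarrow> 'k) set)
    \<and> Zc m 3 \<inter> Zc m 1 \<subset> (Zc m 0 :: (var \<Rightarrow> 'k) set)"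
proof -
  have inf: "infinite (UNIV :: 'k set)" using alg_closed_infinite[OF assms(1)] .
  have m: "m \<ge> 5" "m \<ge> 1" using assms(3) by auto
  have two: "(2::'k) = 0" by (rule assms(2))
  have ss: "s + s = 0" for s :: 'k using two by (metis mult_2 mult_zero_left)
  have s12: "Zc m 1 \<inter> Zc m 2 \<subseteq> (Zc m 0 :: (var \<Rightarrow> 'k) set)"
  proof
    fix a :: "var \<Rightarrow> 'k" assume "a \<in> Zc m 1 \<inter> Zc m 2"
    then have f1: "a \<in> points m \<and> a (X 0) = 0 \<and> a (X 1) = 0 \<and> a (Y 0) = 0 \<and> a (Y 1) = 0 \<and> a (Z 0) = 0
     \<and> (\<forall>j\<le>m. eval (gj m j) a = 0)" and f2: "a (Z 1) = 0"
      using Z1_facts[of a m] Z2_facts[of a m] m by auto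
    then have "a (X 2) = 0" using x2_zero[of a m] m by auto
    then show "a \<in> Zc m 0" using f1 f2 by (intro in_Z0) auto
  qed
  have s23: "Zc m 2 \<inter> Zc m 3 \<subseteq> (Zc m 0 :: (var \<Rightarrow> 'k) set)"
  proof
    fix a :: "var \<Rightarrow> 'k" assume "a \<in> Zc m 2 \<inter> Zc m 3"
    then have f1: "a \<in> points m \<and> a (X 0) = 0 \<and> a (X 1) = 0 \<and> a (Y 0) = 0 \<and> a (Z 1) = 0 \<and> a (Z 0) = 0
     \<and> (\<forall>j\<le>m. eval (gj m j) a = 0)" and f2: "a (Y 1) + a (Z 1) = 0"
      using Z2_facts[of a m] Z3_facts[of a m] m by auto
    then have f3: "a (Y 1) = 0" by simp
    then have "a (X 2) = 0" using x2_zero[of a m] m f1 by auto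
    then show "a \<in> Zc m 0" using f1 f3 by (intro in_Z0) auto
  qed
  have s31: "Zc m 3 \<inter> Zc m 1 \<subseteq> (Zc m 0 :: (var \<Rightarrow> 'k) set)"
  proof
    fix a :: "var \<Rightarrow> 'k" assume "a \<in> Zc m 3 \<inter> Zc m 1"
    then have f1: "a \<in> points m \<and> a (X 0) = 0 \<and> a (X 1) = 0 \<and> a (Y 0) = 0 \<and> a (Y 1) = 0 \<and> a (Z 0) = 0
     \<and> (\<forall>j\<le>m. eval (gj m j) a = 0)" and f2: "a (Y 1) + a (Z 1) = 0"
      using Z1_facts[of a m] Z3_facts[of a m] m by auto
    then have f3: "a (Z 1) = 0" by simp
    then have "a (X 2) = 0" using x2_zero[of a m] m f1 by auto
    then show "a \<in> Zc m 0" using f1 f3 by (intro in_Z0) auto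
  qed
  note I = sat_Iset[OF two m(1)]
  note Z0 = pts_Z0[OF m(1) two]
  show ?thesis
  proof (rule abstract_max[of "Zc m", OF s12 s23 s31])
    show "(pt1 0 :: var \<Rightarrow> 'k) \<in> Zc m 0" "(pt1 0 :: var \<Rightarrow> 'k) \<in> Zc m 1" "(pt1 0 :: var \<Rightarrow> 'k) \<notin> Zc m 2" "(pt1 0 :: var \<Rightarrow> 'k) \<notin> Zc m 3"
      using Z0 pt1_Z1[OF inf m(1)] apply auto[2]
      by (rule not_in[OF I(2)], simp add: evals) (rule not_in[OF I(3)], simp add: evals)
    show "(pt2 0 :: var \<Rightarrow> 'k) \<in> Zc m 0" "(pt2 0 :: var \<Rightarrow> 'k) \<in> Zc m 2" "(pt2 0 :: var \<Rightarrow> 'k) \<notin> Zc m 1" "(pt2 0 :: var \<Rightarrow> 'k) \<notin> Zc m 3"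
      using Z0 pt2_Z2[OF inf m(1)] apply auto[2]
      by (rule not_in[OF I(1)], simp add: evals) (rule not_in[OF I(3)], simp add: evals)
    show "(pt3 0 :: var \<Rightarrow> 'k) \<in> Zc m 0" "(pt3 0 :: var \<Rightarrow> 'k) \<in> Zc m 3" "(pt3 0 :: var \<Rightarrow> 'k) \<notin> Zc m 1" "(pt3 0 :: var \<Rightarrow> 'k) \<notin> Zc m 2"
      using Z0 pt3_Z3[OF inf m(1) two] apply auto[2]
      by (rule not_in[OF I(1)], simp add: evals) (rule not_in[OF I(2)], simp add: evals)
  qed
qed


end
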